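(* Let $\mathbf{A}$ be an $n$-dimensional cyclic Leibniz algebra over $\mathbb{C}$ with a generator $a$ satisfying $$aa^n=\alpha_k a^k+\alpha_{k+1}a^{k+1}+\cdots+\alpha_n a^n$$ for some $2\le k\le n$ and $\alpha_k,\ldots,\alpha_n\in\mathbb{C}$ with $\alpha_k\neq 0$. Then: (i) every generator $x=c_1a+c_2a^2+\cdots+c_na^n$ ($c_i\in\mathbb{C}$) of $\mathbf{A}$ satisfies $$xx^n=c_1^{\,n-k+1}\alpha_k x^k+c_1^{\,n-k}\alpha_{k+1}x^{k+1}+\cdots+c_1\alpha_n x^n,$$ i.e. the coefficient of $x^{k+i}$ is $c_1^{\,n-k+1-i}\alpha_{k+i}$ for $0\le i\le n-k$; (ii) for each $c_1\in\mathbb{C}$ with $c_1\neq 0$, $\mathbf{A}$ has at least one generator $x=c_1a+c_2a^2+\cdots+c_na^n$ (with this first coordinate $c_1$) satisfying the displayed identity of (i).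
   Context: A (left) Leibniz algebra is a vector space with a bilinear product such that $x(yz)=(xy)z+y(xz)$ for all $x,y,z$. A cyclic Leibniz algebra is a Leibniz algebra generated by a single element. For an element $x$ set $x^1=x$ and $x^{j+1}=x\,x^j$. In an $n$-dimensional cyclic Leibniz algebra, an element $x$ is called a generator (cyclic generator) if $\{x,x^2,\ldots,x^n\}$ is a basis. *)

theory Defs
  imports Complex_Main
begin

definition leibniz_algebra ::
  "(complex \<Rightarrow> 'v::ab_group_add \<Rightarrow> 'v) \<Rightarrow> ('v \<Rightarrow> 'v \<Rightarrow> 'v) \<Rightarrow> bool" where
  "leibniz_algebra sc m \<longleftrightarrow>
     vector_space sc \<and>
     (\<forall>x. Vector_Spaces.linear sc sc (m x)) \<and>
     (\<forall>y. Vector_Spaces.linear sc sc (\<lambda>x. m x y)) \<and>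
     (\<forall>x y z. m x (m y z) = m (m x y) z + m y (m x z))"

text \<open>Left-normed powers: x^1 = x, x^(j+1) = x x^j (the value at 0 is irrelevant).\<close>

fun lpow :: "('v \<Rightarrow> 'v \<Rightarrow> 'v) \<Rightarrow> 'v \<Rightarrow> nat \<Rightarrow> 'v" where
  "lpow m x 0 = x"
| "lpow m x (Suc 0) = x"
| "lpow m x (Suc (Suc j)) = m x (lpow m x (Suc j))"

definition is_generator ::
  "(complex \<Rightarrow> 'v::ab_group_add \<Rightarrow> 'v) \<Rightarrow> ('v \<Rightarrow> 'v \<Rightarrow> 'v) \<Rightarrow> nat \<Rightarrow> 'v \<Rightarrow> bool" where
  "is_generator sc m n x \<longleftrightarrow>
     inj_on (lpow m x) {1..n} \<and>
     module.independent sc (lpow m x ` {1..n}) \<and>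
     module.span sc (lpow m x ` {1..n}) = UNIV"

end

theory Submission
  imports Defs
begin

lemma lpow_Suc: "1 \<le> j \<Longrightarrow> lpow m x (Suc j) = m x (lpow m x j)"
  by (cases j) auto

lemma lpow_funpow_Suc: "lpow m x (Suc j) = (m x ^^ j) x"
  by (induction j) (auto simp: lpow_Suc)

lemma lpow_funpow: "1 \<le> j \<Longrightarrow> lpow m x j = (m x ^^ (j - 1)) x"
  using lpow_funpow_Suc[of m x "j - 1"] by simp

lemma hom_funpow: "module s \<Longrightarrow> module_hom s s f \<Longrightarrow> module_hom s s (f ^^ j)"
proof (induction j)
  case 0 then show ?case by (simp add: module.module_hom_ident)
next
  case (Suc j) then show ?case using module_hom_compose[of s s "f ^^ j" s f] by (simp add: comp_def)
qed


lemma key: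
  fixes sc :: "complex \<Rightarrow> 'v::ab_group_add \<Rightarrow> 'v"
    and m :: "'v \<Rightarrow> 'v \<Rightarrow> 'v"
    and n k :: nat and a :: 'v and \<alpha> :: "nat \<Rightarrow> complex" and c :: "nat \<Rightarrow> complex"
  assumes alg: "leibniz_algebra sc m"
    and k: "2 \<le> k" "k \<le> n"
    and rel: "m a (lpow m a n) = (\<Sum>i=k..n. sc (\<alpha> i) (lpow m a i))"
  defines "x \<equiv> (\<Sum>i=1..n. sc (c i) (lpow m a i))"
  shows "m x (lpow m x n) = (\<Sum>i=k..n. sc (c 1 ^ (n + 1 - i) * \<alpha> i) (lpow m x i))"
    and "\<And>j. 1 \<le> j \<Longrightarrow> lpow m x j = sc (c 1 ^ (j - 1)) ((m a ^^ (j - 1)) x)"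
proof -
  have vs: "vector_space sc" and l1: "\<And>x. Vector_Spaces.linear sc sc (m x)"
    and l2: "\<And>y. Vector_Spaces.linear sc sc (\<lambda>x. m x y)"
    and leib: "\<And>x y z. m x (m y z) = m (m x y) z + m y (m x z)"
    using alg unfolding leibniz_algebra_def by (blast+)
  interpret V: vector_space sc by (rule vs)
  have md: "module sc" by (simp add: V.module_axioms)
  interpret P: module_pair sc sc by unfold_locales
  have h1: "\<And>x. module_hom sc sc (m x)" using l1 module_hom_iff_linear by blast
  have h2: "\<And>y. module_hom sc sc (\<lambda>x. m x y)" using l2 module_hom_iff_linear by blast
  define T where "T = m a"
  have hT: "module_hom sc sc T" unfolding T_def by (rule h1)
  have hTj: "\<And>j. module_hom sc sc (T ^^ j)" by (rule hom_funpow[OF md hT])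
  have ann0: "\<forall>z. m (lpow m a j) z = 0" if "2 \<le> j" for j
    using that
  proof (induction j rule: dec_induct)
    case base
    show ?case
    proof
      fix z
      have "m a (m a z) = m (m a a) z + m a (m a z)" by (rule leib)
      then show "m (lpow m a 2) z = 0" by (simp add: numeral_2_eq_2)
    qed
  next
    case (step j)
    show ?case
    proof
      fix z
      have "m a (m (lpow m a j) z) = m (m a (lpow m a j)) z + m (lpow m a j) (m a z)"
        by (rule leib)
      then show "m (lpow m a (Suc j)) z = 0" using step.IH step.hyps
        by (simp add: lpow_Suc module_hom.zero[OF h1])
    qed
  qed
  have ann: "\<And>z. m (lpow m a j) z = 0" if "2 \<le> j" for j
    using ann0[OF that] by blast
  have n1: "1 \<le> n" using k by simp
  have mx: "m x y = sc (c 1) (m a y)" for y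
  proof -
    have "m x y = (\<Sum>i=1..n. sc (c i) (m (lpow m a i) y))"
      unfolding x_def by (subst module_hom.sum[OF h2]) (simp add: module_hom.scale[OF h2])
    also have "\<dots> = sc (c 1) (m (lpow m a 1) y) + (\<Sum>i=Suc 1..n. sc (c i) (m (lpow m a i) y))"
      using n1 by (simp add: sum.atLeast_Suc_atMost)
    also have "(\<Sum>i=Suc 1..n. sc (c i) (m (lpow m a i) y)) = 0"
      by (rule sum.neutral) (auto simp: ann)
    finally show ?thesis by simp
  qed
  have pxS: "lpow m x (Suc j) = sc (c 1 ^ j) ((m a ^^ j) x)" for j
  proof (induction j)
    case 0 then show ?case by simp
  next
    case (Suc j)
    have "lpow m x (Suc (Suc j)) = m x (lpow m x (Suc j))" by simp
    also have "\<dots> = sc (c 1) (m a (sc (c 1 ^ j) ((m a ^^ j) x)))" by (simp add: Suc.IH mx)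
    also have "\<dots> = sc (c 1 ^ Suc j) ((m a ^^ Suc j) x)"
      by (simp add: module_hom.scale[OF h1])
    finally show ?case .
  qed
  show px: "lpow m x j = sc (c 1 ^ (j - 1)) ((m a ^^ (j - 1)) x)" if "1 \<le> j" for j
    using pxS[of "j - 1"] that by simp
  define R where "R y = (\<Sum>i=k..n. sc (\<alpha> i) ((T ^^ (i - 1)) y))" for y
  have hR: "module_hom sc sc R"
    unfolding R_def
    by (rule P.module_hom_sum) (auto intro: P.module_hom_scale hTj simp: md)
  have pa: "lpow m a i = (T ^^ (i - 1)) a" if "1 \<le> i" for i
    using lpow_funpow[OF that] T_def by simp
  obtain n' where n': "n = Suc n'" using n1 by (cases n) auto
  have Tn: "(T ^^ n) a = R a"
  proof -
    have "(T ^^ n) a = T ((T ^^ (n - 1)) a)" using n' by simp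
    also have "\<dots> = m a (lpow m a n)" using pa[OF n1] T_def by simp
    also have "\<dots> = R a" unfolding rel R_def using k
      by (intro sum.cong refl) (simp add: pa)
    finally show ?thesis .
  qed
  have comm: "(T ^^ p) ((T ^^ q) y) = (T ^^ q) ((T ^^ p) y)" for p q y
  proof -
    have "(T ^^ p) ((T ^^ q) y) = (T ^^ (p + q)) y" by (simp add: funpow_add)
    moreover have "(T ^^ q) ((T ^^ p) y) = (T ^^ (q + p)) y" by (simp add: funpow_add)
    ultimately show ?thesis by (simp add: add.commute)
  qed
  have Tnj: "(T ^^ n) ((T ^^ j) a) = R ((T ^^ j) a)" for j
  proof -
    have "(T ^^ n) ((T ^^ j) a) = (T ^^ j) ((T ^^ n) a)" by (rule comm)
    also have "\<dots> = (T ^^ j) (R a)" by (simp add: Tn)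
    also have "\<dots> = (\<Sum>i=k..n. sc (\<alpha> i) ((T ^^ j) ((T ^^ (i - 1)) a)))"
      unfolding R_def module_hom.sum[OF hTj] module_hom.scale[OF hTj] ..
    also have "\<dots> = R ((T ^^ j) a)"
      unfolding R_def
    proof (rule sum.cong[OF refl])
      fix i
      show "sc (\<alpha> i) ((T ^^ j) ((T ^^ (i - 1)) a)) = sc (\<alpha> i) ((T ^^ (i - 1)) ((T ^^ j) a))"
        using comm[of j "i - 1" a] by simp
    qed
    finally show ?thesis .
  qed
  have xspan: "x \<in> V.span (range (\<lambda>j. (T ^^ j) a))"
    unfolding x_def
  proof (intro V.span_sum V.span_scale)
    fix i assume "i \<in> {1..n}"
    then have "lpow m a i = (T ^^ (i - 1)) a" using pa by simp
    then show "lpow m a i \<in> V.span (range (\<lambda>j. (T ^^ j) a))"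
      by (simp add: V.span_base)
  qed
  have TnR: "(T ^^ n) x = R x"
    by (rule P.module_hom_eq_on_span[OF hTj hR _ xspan]) (auto simp: Tnj)
  show "m x (lpow m x n) = (\<Sum>i=k..n. sc (c 1 ^ (n + 1 - i) * \<alpha> i) (lpow m x i))"
  proof -
    have "m x (lpow m x n) = sc (c 1) (T (sc (c 1 ^ n') ((T ^^ n') x)))"
      using pxS[of n'] mx n' T_def by simp
    also have "\<dots> = sc (c 1 * c 1 ^ n') (T ((T ^^ n') x))"
      by (simp add: module_hom.scale[OF hT])
    also have "\<dots> = sc (c 1 ^ n) ((T ^^ n) x)"
      using n' by simp
    also have "\<dots> = (\<Sum>i=k..n. sc (c 1 ^ n * \<alpha> i) ((T ^^ (i - 1)) x))"
      unfolding TnR R_def V.scale_sum_right by simp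
    also have "\<dots> = (\<Sum>i=k..n. sc (c 1 ^ (n + 1 - i) * \<alpha> i) (lpow m x i))"
    proof (rule sum.cong[OF refl])
      fix i assume i: "i \<in> {k..n}"
      then have e: "c 1 ^ (n + 1 - i) * c 1 ^ (i - 1) = c 1 ^ n" using k
        by (simp add: power_add[symmetric])
      have l: "lpow m x i = sc (c 1 ^ (i - 1)) ((T ^^ (i - 1)) x)"
        using px[of i] i k T_def by simp
      have "sc (c 1 ^ (n + 1 - i) * \<alpha> i) (lpow m x i)
          = sc (c 1 ^ (n + 1 - i) * \<alpha> i * c 1 ^ (i - 1)) ((T ^^ (i - 1)) x)"
        unfolding l by simp
      also have "c 1 ^ (n + 1 - i) * \<alpha> i * c 1 ^ (i - 1) = c 1 ^ n * \<alpha> i"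
        using e by (simp add: mult_ac)
      finally show "sc (c 1 ^ n * \<alpha> i) ((T ^^ (i - 1)) x) =
                 sc (c 1 ^ (n + 1 - i) * \<alpha> i) (lpow m x i)" by simp
    qed
    finally show ?thesis .
  qed
qed

theorem lemma3p2:
  fixes sc :: "complex \<Rightarrow> 'v::ab_group_add \<Rightarrow> 'v"
    and m :: "'v \<Rightarrow> 'v \<Rightarrow> 'v"
    and n k :: nat and a :: 'v and \<alpha> :: "nat \<Rightarrow> complex"
  assumes alg: "leibniz_algebra sc m"
    and gen: "is_generator sc m n a"
    and k: "2 \<le> k" "k \<le> n"
    and rel: "m a (lpow m a n) = (\<Sum>i=k..n. sc (\<alpha> i) (lpow m a i))"
    and ak: "\<alpha> k \<noteq> 0"
  shows "(\<forall>c :: nat \<Rightarrow> complex.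
            is_generator sc m n (\<Sum>i=1..n. sc (c i) (lpow m a i)) \<longrightarrow>
            (let x = (\<Sum>i=1..n. sc (c i) (lpow m a i)) in
               m x (lpow m x n) = (\<Sum>i=k..n. sc (c 1 ^ (n + 1 - i) * \<alpha> i) (lpow m x i))))
       \<and> (\<forall>c1 :: complex. c1 \<noteq> 0 \<longrightarrow>
            (\<exists>c :: nat \<Rightarrow> complex. c 1 = c1 \<and>
               (let x = (\<Sum>i=1..n. sc (c i) (lpow m a i)) in
                  is_generator sc m n x \<and>
                  m x (lpow m x n) = (\<Sum>i=k..n. sc (c 1 ^ (n + 1 - i) * \<alpha> i) (lpow m x i)))))"
proof -
  have vs: "vector_space sc" and l1: "\<And>x. Vector_Spaces.linear sc sc (m x)"
    using alg unfolding leibniz_algebra_def by (blast+)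
  interpret V: vector_space sc by (rule vs)
  have md: "module sc" by (simp add: V.module_axioms)
  have h1: "\<And>x. module_hom sc sc (m x)" using l1 module_hom_iff_linear by blast
  have n1: "1 \<le> n" using k by simp
  have part1: "\<forall>c :: nat \<Rightarrow> complex.
            is_generator sc m n (\<Sum>i=1..n. sc (c i) (lpow m a i)) \<longrightarrow>
            (let x = (\<Sum>i=1..n. sc (c i) (lpow m a i)) in
               m x (lpow m x n) = (\<Sum>i=k..n. sc (c 1 ^ (n + 1 - i) * \<alpha> i) (lpow m x i)))"
    using key(1)[OF alg k rel] by (simp add: Let_def)
  have part2: "\<forall>c1 :: complex. c1 \<noteq> 0 \<longrightarrow>
            (\<exists>c :: nat \<Rightarrow> complex. c 1 = c1 \<and>
               (let x = (\<Sum>i=1..n. sc (c i) (lpow m a i)) in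
                  is_generator sc m n x \<and>
                  m x (lpow m x n) = (\<Sum>i=k..n. sc (c 1 ^ (n + 1 - i) * \<alpha> i) (lpow m x i))))"
  proof (intro allI impI)
    fix c1 :: complex assume c1: "c1 \<noteq> 0"
    define c where "c = (\<lambda>i::nat. if i = 1 then c1 else 0)"
    define x where "x = (\<Sum>i=1..n. sc (c i) (lpow m a i))"
    have fe: "(\<lambda>i. sc (c i) (lpow m a i)) = (\<lambda>i. if i = 1 then sc c1 (lpow m a i) else 0)"
      by (auto simp: c_def)
    have xa: "x = sc c1 a" unfolding x_def fe using n1 by simp
    have px: "lpow m x j = sc (c1 ^ j) (lpow m a j)" if "1 \<le> j" for j
    proof -
      have "lpow m x j = sc (c 1 ^ (j - 1)) ((m a ^^ (j - 1)) x)"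
        using key(2)[OF alg k rel, of j c] that unfolding x_def by simp
      also have "\<dots> = sc (c1 ^ (j - 1) * c1) ((m a ^^ (j - 1)) a)"
        unfolding xa module_hom.scale[OF hom_funpow[OF md h1]] by (simp add: c_def)
      also have "\<dots> = sc (c1 ^ j) (lpow m a j)"
        using that lpow_funpow[OF that, of m a]
        by (metis Suc_diff_le diff_Suc_1 power_Suc2)
      finally show ?thesis .
    qed
    define B where "B = lpow m a ` {1..n}"
    define B' where "B' = lpow m x ` {1..n}"
    have injB: "inj_on (lpow m a) {1..n}" and indB: "V.independent B" and spB: "V.span B = UNIV"
      using gen unfolding is_generator_def B_def by auto
    have finB: "finite B" "finite B'" unfolding B_def B'_def by auto
    have cardB: "card B = n" unfolding B_def using card_image[OF injB] by simp
    have "B \<subseteq> V.span B'"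
    proof
      fix v assume "v \<in> B"
      then obtain j where j: "j \<in> {1..n}" "v = lpow m a j" unfolding B_def by auto
      have "v = sc (inverse (c1 ^ j)) (lpow m x j)" using j px[of j] c1 by simp
      moreover have "lpow m x j \<in> V.span B'" unfolding B'_def using j by (auto intro: V.span_base)
      ultimately show "v \<in> V.span B'" by (simp add: V.span_scale)
    qed
    then have "V.span B \<subseteq> V.span B'" by (rule V.span_minimal[OF _ V.subspace_span])
    then have spB': "V.span B' = UNIV" using spB by auto
    interpret F: finite_dimensional_vector_space sc B
      by unfold_locales (use finB indB spB in auto)
    have dimU: "V.dim UNIV = n" using cardB F.dim_UNIV by simp
    have c1': "card B' \<le> n" unfolding B'_def using card_image_le[of "{1..n}" "lpow m x"] by simp
    have c2': "n \<le> card B'" using V.dim_le_card[of UNIV B'] spB' finB dimU by simp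
    have injB': "inj_on (lpow m x) {1..n}"
      by (rule eq_card_imp_inj_on) (use c1' c2' in \<open>auto simp: B'_def\<close>)
    have indB': "V.independent B'"
      by (rule F.card_le_dim_spanning[of B' UNIV]) (use spB' finB dimU c1' c2' in auto)
    have genx: "is_generator sc m n x"
      unfolding is_generator_def using injB' indB' spB' unfolding B'_def by auto
    have eqx: "m x (lpow m x n) = (\<Sum>i=k..n. sc (c 1 ^ (n + 1 - i) * \<alpha> i) (lpow m x i))"
      using key(1)[OF alg k rel, of c] unfolding x_def by simp
    show "\<exists>c :: nat \<Rightarrow> complex. c 1 = c1 \<and>
               (let x = (\<Sum>i=1..n. sc (c i) (lpow m a i)) in
                  is_generator sc m n x \<and>
                  m x (lpow m x n) = (\<Sum>i=k..n. sc (c 1 ^ (n + 1 - i) * \<alpha> i) (lpow m x i)))"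
      by (rule exI[of _ c], unfold Let_def x_def[symmetric]) (use genx eqx in \<open>simp add: c_def\<close>)
  qed
  show ?thesis using part1 part2 by blast
qed

end
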